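(* Let $(M,\Gamma,\le)$ be a $po$-$\Gamma$-groupoid and let $f$ be a fuzzy subset of $M$. Then $f$ is a fuzzy left ideal of $M$ if and only if (1) $1\circ f\preceq f$ and (2) for all $x,y\in M$, if $x\le y$ then $f(x)\ge f(y)$.
   Context: Let $M$ and $\Gamma$ be nonempty sets with a map $M\times\Gamma\times M\to M$, $(a,\gamma,b)\mapsto a\gamma b$. A $po$-$\Gamma$-groupoid is such an $M$ with a partial order $\le$ on $M$ such that $a\le b$ implies $a\gamma c\le b\gamma c$ and $c\gamma a\le c\gamma b$ for all $c\in M$, $\gamma\in\Gamma$. A fuzzy subset of $M$ is a map $M\to[0,1]$. For $a\in M$ let $A_a=\{(y,z)\in M\times M : a\le y\gamma z \text{ for some } \gamma\in\Gamma\}$. For fuzzy subsets $f,g$, define $(f\circ g)(a)=\bigvee_{(y,z)\in A_a}\min\{f(y),g(z)\}$ if $A_a\neq\emptyset$ and $(f\circ g)(a)=0$ if $A_a=\emptyset$. $f\preceq g$ means $f(a)\le g(a)$ for all $a\in M$. $1$ denotes the fuzzy subset with $1(x)=1$ for all $x\in M$. A fuzzy left ideal of $M$ is a fuzzy subset $f$ with $f(x\gamma y)\ge f(y)$ for all $x,y\in M$, $\gamma\in\Gamma$, and such that $x\le y$ implies $f(x)\ge f(y)$. *)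

theory Defs
  imports Complex_Main
begin

definition po_Gamma_groupoid ::
  "('m \<Rightarrow> 'g \<Rightarrow> 'm \<Rightarrow> 'm) \<Rightarrow> ('m \<Rightarrow> 'm \<Rightarrow> bool) \<Rightarrow> bool" where
  "po_Gamma_groupoid op le \<longleftrightarrow>
     (\<forall>a. le a a) \<and> (\<forall>a b. le a b \<and> le b a \<longrightarrow> a = b) \<and>
     (\<forall>a b c. le a b \<and> le b c \<longrightarrow> le a c) \<and>
     (\<forall>a b c \<gamma>. le a b \<longrightarrow> le (op a \<gamma> c) (op b \<gamma> c) \<and> le (op c \<gamma> a) (op c \<gamma> b))"

definition fuzzy_subset :: "('m \<Rightarrow> real) \<Rightarrow> bool" where
  "fuzzy_subset f \<longleftrightarrow> (\<forall>x. 0 \<le> f x \<and> f x \<le> 1)"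

definition A_set :: "('m \<Rightarrow> 'g \<Rightarrow> 'm \<Rightarrow> 'm) \<Rightarrow> ('m \<Rightarrow> 'm \<Rightarrow> bool) \<Rightarrow> 'm \<Rightarrow> ('m \<times> 'm) set" where
  "A_set op le a = {(y, z). \<exists>\<gamma>. le a (op y \<gamma> z)}"

definition fuzzy_comp ::
  "('m \<Rightarrow> 'g \<Rightarrow> 'm \<Rightarrow> 'm) \<Rightarrow> ('m \<Rightarrow> 'm \<Rightarrow> bool) \<Rightarrow> ('m \<Rightarrow> real) \<Rightarrow> ('m \<Rightarrow> real) \<Rightarrow> 'm \<Rightarrow> real" where
  "fuzzy_comp op le f g a =
     (if A_set op le a = {} then 0
      else Sup ((\<lambda>(y, z). min (f y) (g z)) ` A_set op le a))"

definition fuzzy_le :: "('m \<Rightarrow> real) \<Rightarrow> ('m \<Rightarrow> real) \<Rightarrow> bool" where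
  "fuzzy_le f g \<longleftrightarrow> (\<forall>a. f a \<le> g a)"

definition fuzzy_left_ideal ::
  "('m \<Rightarrow> 'g \<Rightarrow> 'm \<Rightarrow> 'm) \<Rightarrow> ('m \<Rightarrow> 'm \<Rightarrow> bool) \<Rightarrow> ('m \<Rightarrow> real) \<Rightarrow> bool" where
  "fuzzy_left_ideal op le f \<longleftrightarrow>
     (\<forall>x y \<gamma>. f (op x \<gamma> y) \<ge> f y) \<and> (\<forall>x y. le x y \<longrightarrow> f x \<ge> f y)"

end

theory Submission
  imports Defs
begin

theorem proposition5:
  fixes op :: "'m \<Rightarrow> 'g \<Rightarrow> 'm \<Rightarrow> 'm" and le :: "'m \<Rightarrow> 'm \<Rightarrow> bool" and f :: "'m \<Rightarrow> real"
  assumes "po_Gamma_groupoid op le"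
    and "fuzzy_subset f"
  shows "fuzzy_left_ideal op le f \<longleftrightarrow>
           (fuzzy_le (fuzzy_comp op le (\<lambda>_. 1) f) f \<and> (\<forall>x y. le x y \<longrightarrow> f x \<ge> f y))"
proof
  assume L: "fuzzy_left_ideal op le f"
  have mono: "\<forall>x y. le x y \<longrightarrow> f x \<ge> f y" using L unfolding fuzzy_left_ideal_def by blast
  have lid: "\<And>x y \<gamma>. f (op x \<gamma> y) \<ge> f y" using L unfolding fuzzy_left_ideal_def by blast
  have "fuzzy_comp op le (\<lambda>_. 1) f a \<le> f a" for a
  proof (cases "A_set op le a = {}")
    case True thus ?thesis using assms(2) by (simp add: fuzzy_comp_def fuzzy_subset_def)
  next
    case False
    have "Sup ((\<lambda>(y, z). min ((\<lambda>_. 1::real) y) (f z)) ` A_set op le a) \<le> f a"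
    proof (rule cSup_least)
      show "(\<lambda>(y, z). min ((\<lambda>_. 1::real) y) (f z)) ` A_set op le a \<noteq> {}" using False by blast
    next
      fix r assume "r \<in> (\<lambda>(y, z). min ((\<lambda>_. 1::real) y) (f z)) ` A_set op le a"
      then obtain y z \<gamma> where r: "r = min 1 (f z)" and "le a (op y \<gamma> z)"
        by (auto simp: A_set_def)
      hence "f a \<ge> f (op y \<gamma> z)" using mono by blast
      moreover have "f (op y \<gamma> z) \<ge> f z" by (rule lid)
      ultimately show "r \<le> f a" using r by linarith
    qed
    thus ?thesis using False by (simp add: fuzzy_comp_def)
  qed
  thus "fuzzy_le (fuzzy_comp op le (\<lambda>_. 1) f) f \<and> (\<forall>x y. le x y \<longrightarrow> f x \<ge> f y)"
    using mono by (simp add: fuzzy_le_def)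
next
  assume R: "fuzzy_le (fuzzy_comp op le (\<lambda>_. 1) f) f \<and> (\<forall>x y. le x y \<longrightarrow> f x \<ge> f y)"
  have refl: "\<And>a. le a a" using assms(1) unfolding po_Gamma_groupoid_def by blast
  have "f (op x \<gamma> y) \<ge> f y" for x y \<gamma>
  proof -
    let ?a = "op x \<gamma> y"
    let ?S = "(\<lambda>(y, z). min ((\<lambda>_. 1::real) y) (f z)) ` A_set op le ?a"
    have mem: "(x, y) \<in> A_set op le ?a" using refl by (auto simp: A_set_def)
    have bdd: "bdd_above ?S" by (rule bdd_aboveI[where M=1]) auto
    have "min 1 (f y) \<in> ?S" using mem by force
    hence "min 1 (f y) \<le> Sup ?S" using bdd by (rule cSup_upper)
    moreover have "fuzzy_comp op le (\<lambda>_. 1) f ?a = Sup ?S" using mem by (auto simp: fuzzy_comp_def)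
    moreover have "fuzzy_comp op le (\<lambda>_. 1) f ?a \<le> f ?a" using R by (simp add: fuzzy_le_def)
    moreover have "f y \<le> 1" using assms(2) by (simp add: fuzzy_subset_def)
    ultimately show ?thesis by linarith
  qed
  thus "fuzzy_left_ideal op le f" using R by (simp add: fuzzy_left_ideal_def)
qed

end
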